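(* Let $\varepsilon,\delta,p$ be positive constants with $\varepsilon<1/2$. Let $(V_1,V_2,V_3)$ be a triple of pairwise disjoint vertex sets in a graph such that for all $i,j$ the density of $(V_i,V_j)$ is $d_{ij}p$ with $d_{ij}\ge\delta$. Then for every $\varepsilon$-typical vertex $v\in V_1$ there exist sets $N_j''\subset N(v)\cap V_j$ for $j\in\{2,3\}$ such that (i) there are at least $(1-6\varepsilon-2\varepsilon/\delta)d_{12}d_{13}d_{23}p^3|V_2||V_3|$ edges between $N_2''$ and $N_3''$, and if $v$ is $\varepsilon$-good, then at least that many of the edges between $N_2''$ and $N_3''$ are $\varepsilon$-good; (ii) for all $j,k$ with $\{j,k\}=\{2,3\}$, no vertex of $N_j''$ has more than $(1+2\varepsilon/\delta)(1+\varepsilon)^2d_{1k}d_{23}p^2|V_k|$ neighbours in $N_k''$.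
   Context: For disjoint $X,Y$, $d(X,Y)=e(X,Y)/(|X||Y|)$; $x=(1\pm a)y$ means $x\in[(1-a)y,(1+a)y]$. A pair $(X,Y)$ is $(\varepsilon,p)$-regular if $|d(X,Y)-d(X',Y')|\le\varepsilon p$ for all $X'\subset X,Y'\subset Y$ with $|X'|\ge\varepsilon|X|,|Y'|\ge\varepsilon|Y|$. A vertex $v\in V_1$ is $\varepsilon$-typical if for $j\in\{2,3\}$, $N_j=N(v)\cap V_j$ satisfies $|N_j|=(1\pm\varepsilon)d_{1j}p|V_j|$, and there exist $N_j'\subset N_j$ with $|N_j'|\ge(1-\varepsilon)|N_j|$ such that $(N_2',N_3')$ is $(\varepsilon,p)$-regular with density $(1\pm\varepsilon)d_{23}p$. An edge between $V_2$ and $V_3$ is $\varepsilon$-good if its endpoints have at least $(1-\varepsilon)d_{12}d_{13}p^2|V_1|$ common neighbours in $V_1$. An $\varepsilon$-typical vertex $v\in V_1$ is $\varepsilon$-good if at most $\varepsilon d_{12}d_{13}d_{23}p^3|V_2||V_3|$ edges between $N(v)\cap V_2$ and $N(v)\cap V_3$ are not $\varepsilon$-good. *)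

theory Defs
  imports Complex_Main
begin

definition graph :: "('a \<Rightarrow> 'a \<Rightarrow> bool) \<Rightarrow> bool" where
  "graph E \<longleftrightarrow> (\<forall>x y. E x y \<longrightarrow> E y x) \<and> (\<forall>x. \<not> E x x)"

definition nbhd :: "('a \<Rightarrow> 'a \<Rightarrow> bool) \<Rightarrow> 'a \<Rightarrow> 'a set" where
  "nbhd E v = {u. E v u}"

definition edges_between :: "('a \<Rightarrow> 'a \<Rightarrow> bool) \<Rightarrow> 'a set \<Rightarrow> 'a set \<Rightarrow> ('a \<times> 'a) set" where
  "edges_between E X Y = {(x, y). x \<in> X \<and> y \<in> Y \<and> E x y}"

definition e_count :: "('a \<Rightarrow> 'a \<Rightarrow> bool) \<Rightarrow> 'a set \<Rightarrow> 'a set \<Rightarrow> nat" where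
  "e_count E X Y = card (edges_between E X Y)"

definition density :: "('a \<Rightarrow> 'a \<Rightarrow> bool) \<Rightarrow> 'a set \<Rightarrow> 'a set \<Rightarrow> real" where
  "density E X Y = real (e_count E X Y) / (real (card X) * real (card Y))"

text \<open>x = (1 +- a) y\<close>
definition approx_eq :: "real \<Rightarrow> real \<Rightarrow> real \<Rightarrow> bool" where
  "approx_eq x a y \<longleftrightarrow> (1 - a) * y \<le> x \<and> x \<le> (1 + a) * y"

definition eps_p_regular :: "('a \<Rightarrow> 'a \<Rightarrow> bool) \<Rightarrow> real \<Rightarrow> real \<Rightarrow> 'a set \<Rightarrow> 'a set \<Rightarrow> bool" where
  "eps_p_regular E \<epsilon> p X Y \<longleftrightarrow>
     (\<forall>X' Y'. X' \<subseteq> X \<and> Y' \<subseteq> Y \<and> real (card X') \<ge> \<epsilon> * real (card X)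
        \<and> real (card Y') \<ge> \<epsilon> * real (card Y)
        \<longrightarrow> \<bar>density E X Y - density E X' Y'\<bar> \<le> \<epsilon> * p)"

definition typical :: "('a \<Rightarrow> 'a \<Rightarrow> bool) \<Rightarrow> real \<Rightarrow> real \<Rightarrow> real \<Rightarrow> real \<Rightarrow> real
    \<Rightarrow> 'a set \<Rightarrow> 'a set \<Rightarrow> 'a \<Rightarrow> bool" where
  "typical E \<epsilon> p d12 d13 d23 V2 V3 v \<longleftrightarrow>
     (let N2 = nbhd E v \<inter> V2; N3 = nbhd E v \<inter> V3 in
       approx_eq (real (card N2)) \<epsilon> (d12 * p * real (card V2)) \<and>
       approx_eq (real (card N3)) \<epsilon> (d13 * p * real (card V3)) \<and>
       (\<exists>N2' N3'. N2' \<subseteq> N2 \<and> N3' \<subseteq> N3 \<and>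
          real (card N2') \<ge> (1 - \<epsilon>) * real (card N2) \<and>
          real (card N3') \<ge> (1 - \<epsilon>) * real (card N3) \<and>
          eps_p_regular E \<epsilon> p N2' N3' \<and>
          approx_eq (density E N2' N3') \<epsilon> (d23 * p)))"

definition good_edge :: "('a \<Rightarrow> 'a \<Rightarrow> bool) \<Rightarrow> real \<Rightarrow> real \<Rightarrow> real \<Rightarrow> real
    \<Rightarrow> 'a set \<Rightarrow> 'a set \<Rightarrow> 'a set \<Rightarrow> 'a \<times> 'a \<Rightarrow> bool" where
  "good_edge E \<epsilon> p d12 d13 V1 V2 V3 xy \<longleftrightarrow>
     (fst xy \<in> V2 \<and> snd xy \<in> V3 \<and> E (fst xy) (snd xy) \<and>
      real (card (nbhd E (fst xy) \<inter> nbhd E (snd xy) \<inter> V1))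
        \<ge> (1 - \<epsilon>) * d12 * d13 * p ^ 2 * real (card V1))"

definition good_vertex :: "('a \<Rightarrow> 'a \<Rightarrow> bool) \<Rightarrow> real \<Rightarrow> real \<Rightarrow> real \<Rightarrow> real \<Rightarrow> real
    \<Rightarrow> 'a set \<Rightarrow> 'a set \<Rightarrow> 'a set \<Rightarrow> 'a \<Rightarrow> bool" where
  "good_vertex E \<epsilon> p d12 d13 d23 V1 V2 V3 v \<longleftrightarrow>
     typical E \<epsilon> p d12 d13 d23 V2 V3 v \<and>
     real (card {xy \<in> edges_between E (nbhd E v \<inter> V2) (nbhd E v \<inter> V3).
                  \<not> good_edge E \<epsilon> p d12 d13 V1 V2 V3 xy})
       \<le> \<epsilon> * d12 * d13 * d23 * p ^ 3 * real (card V2) * real (card V3)"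

end

theory Submission
  imports Defs Complex_Main
begin


lemma edges_Sigma: "edges_between E X Y = Sigma X (\<lambda>x. nbhd E x \<inter> Y)"
  by (auto simp: edges_between_def nbhd_def)

lemma e_count_sum:
  assumes "finite X" "finite Y"
  shows "e_count E X Y = (\<Sum>x\<in>X. card (nbhd E x \<inter> Y))"
  using assms by (simp add: e_count_def edges_Sigma)

lemma e_count_sym:
  assumes "graph E"
  shows "e_count E X Y = e_count E Y X"
proof -
  have "edges_between E X Y = (\<lambda>(a,b). (b,a)) ` edges_between E Y X"
    using assms by (auto simp: edges_between_def graph_def image_iff)
  moreover have "inj_on (\<lambda>(a,b). (b,a)) (edges_between E Y X)"
    by (auto simp: inj_on_def)
  ultimately show ?thesis by (simp add: e_count_def card_image)
qed




lemma top_avg_aux: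
  fixes f :: "'a \<Rightarrow> real"
  shows "\<forall>S. finite S \<and> card S = m + j \<longrightarrow>
     (\<exists>W\<subseteq>S. card W = m \<and> real m * sum f S \<le> real (card S) * sum f W)"
proof (induction j)
  case 0
  then show ?case by auto
next
  case (Suc j)
  show ?case
  proof (intro allI impI)
    fix S :: "'a set" assume S: "finite S \<and> card S = m + Suc j"
    then have ne: "S \<noteq> {}" by auto
    obtain x where x: "x \<in> S" "\<forall>y\<in>S. f x \<le> f y"
    proof -
      have "Min (f ` S) \<in> f ` S" using S ne by (intro Min_in) auto
      then obtain x where "x \<in> S" "f x = Min (f ` S)" by auto
      moreover have "\<forall>y\<in>S. Min (f ` S) \<le> f y" using S by auto
      ultimately show ?thesis using that by auto
    qed
    define S' where "S' = S - {x}"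
    have S': "finite S'" "card S' = m + j" using S x by (auto simp: S'_def)
    from Suc.IH S' obtain W where W: "W \<subseteq> S'" "card W = m" "real m * sum f S' \<le> real (m+j) * sum f W"
      by auto
    have sumS: "sum f S = sum f S' + f x" using S x
      by (simp add: S'_def sum.remove)
    have "real (card S) * f x \<le> sum f S"
      using sum_bounded_below[of S "f x" f] x by auto
    hence fx: "real (m+j) * f x \<le> sum f S'" using S sumS by (simp add: algebra_simps)
    have "W \<subseteq> S" using W S'_def by auto
    moreover have "real m * sum f S \<le> real (card S) * sum f W"
    proof (cases "m + j = 0")
      case True
      then have "m = 0" by simp
      moreover have "W = {}" using \<open>m = 0\<close> W(1,2) S'(1) by (metis card_eq_0_iff finite_subset)
      ultimately show ?thesis by simp
    next
      case False
      then have pos: "real (m+j) > 0" by (simp del: of_nat_add)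
      have "real (m+j) * (real m * sum f S) = real (m+j) * (real m * sum f S') + real m * (real (m+j) * f x)"
        by (simp add: sumS algebra_simps)
      also have "\<dots> \<le> real (m+j) * (real m * sum f S') + real m * sum f S'"
        using fx by (intro add_left_mono mult_left_mono) auto
      also have "\<dots> = real (m+j+1) * (real m * sum f S')" by (simp add: algebra_simps)
      also have "\<dots> \<le> real (m+j+1) * (real (m+j) * sum f W)"
        using W(3) by (intro mult_left_mono) auto
      finally have "real (m+j) * (real m * sum f S) \<le> real (m+j) * (real (card S) * sum f W)"
        using S by (simp add: algebra_simps)
      then show ?thesis using pos by simp
    qed
    ultimately show "\<exists>W\<subseteq>S. card W = m \<and> real m * sum f S \<le> real (card S) * sum f W"
      using W by auto
  qed
qed

lemma top_avg:
  fixes f :: "'a \<Rightarrow> real"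
  assumes "finite S" "m \<le> card S"
  shows "\<exists>W\<subseteq>S. card W = m \<and> real m * sum f S \<le> real (card S) * sum f W"
proof -
  have "card S = m + (card S - m)" using assms by simp
  then show ?thesis using top_avg_aux[of m "card S - m" f] assms by blast
qed




lemma side:
  fixes A :: "'a set" and f :: "'a \<Rightarrow> real" and \<epsilon> c T :: real
  assumes finA: "finite A" and e0: "0 < \<epsilon>" and e1: "\<epsilon> < 1/2"
    and reg: "\<And>X. X \<subseteq> A \<Longrightarrow> \<epsilon> * real (card A) \<le> real (card X) \<Longrightarrow> sum f X \<le> c * real (card X)"
    and cT: "c \<le> T"
    and Apos: "card A > 0"
  shows "real (card {x\<in>A. T < f x}) \<le> \<epsilon> * real (card A)"
    and "T * real (card {x\<in>A. T < f x}) \<le> sum f {x\<in>A. T < f x}"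
    and "sum f {x\<in>A. T < f x} \<le> (sum f A / card A) * card {x\<in>A. T < f x}
           + 2*\<epsilon>*(c - sum f A / card A) * card A / (1 - 2*\<epsilon>)"
proof -
  define B where "B = {x\<in>A. T < f x}"
  define n where "n = card A"
  define b where "b = card B"
  define a where "a = sum f A / real n"
  define \<eta> where "\<eta> = c - a"
  define S where "S = sum f B"
  have BA: "B \<subseteq> A" and finB: "finite B" using finA by (auto simp: B_def)
  have npos: "real n > 0" using Apos n_def by simp
  have sumA: "sum f A = a * real n" using npos by (simp add: a_def)
  have "\<epsilon> * real n \<le> real n" using e1 npos by simp
  hence "sum f A \<le> c * real n" using reg[of A] n_def by auto
  hence eta0: "\<eta> \<ge> 0" using npos sumA by (simp add: \<eta>_def)
  have d0: "1 - 2*\<epsilon> > 0" using e1 by simp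
  have low: "T * real b \<le> S"
    using sum_bounded_below[of B T f] by (auto simp: B_def b_def S_def mult.commute)
  have main: "real b \<le> \<epsilon> * real n \<and> S \<le> a * real b + 2*\<epsilon>*\<eta>*real n/(1-2*\<epsilon>)"
  proof (cases "b = 0")
    case True
    then have "B = {}" using finB b_def by simp
    then show ?thesis using True e0 npos eta0 d0 by (simp add: S_def)
  next
    case False
    then have Bne: "B \<noteq> {}" using b_def by auto
    have slt: "T * real b < S"
    proof -
      have "sum (\<lambda>_. T) B < sum f B"
        using finB Bne by (intro sum_strict_mono) (auto simp: B_def)
      then show ?thesis by (simp add: S_def b_def mult.commute)
    qed
    have en1: "\<epsilon> * real n > 1"
    proof (rule ccontr)
      assume na: "\<not> \<epsilon> * real n > 1"
      obtain x where x: "x \<in> B" using Bne by auto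
      have "sum f {x} \<le> c * real (card {x})"
        using na x BA by (intro reg) (auto simp: n_def)
      then have "f x \<le> T" using cT by simp
      then show False using x by (simp add: B_def)
    qed
    have blt: "real b < \<epsilon> * real n"
    proof (rule ccontr)
      assume "\<not> ?thesis"
      then have "S \<le> c * real b" using reg[OF BA] by (simp add: S_def b_def n_def)
      moreover have "c * real b \<le> T * real b" using cT by (simp add: mult_right_mono)
      ultimately show False using slt by simp
    qed
    define k where "k = nat \<lceil>\<epsilon> * real n\<rceil>"
    have k1: "\<epsilon> * real n \<le> real k" unfolding k_def by linarith
    have "0 \<le> \<epsilon> * real n" using e0 npos by simp
    hence cz: "0 \<le> \<lceil>\<epsilon> * real n\<rceil>" by linarith
    have kr: "real k = of_int \<lceil>\<epsilon> * real n\<rceil>" using cz k_def by simp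
    have k2: "real k < \<epsilon> * real n + 1" using kr ceiling_correct[of "\<epsilon> * real n"] by linarith
    have kn: "k \<le> n"
    proof -
      have "\<epsilon> * real n \<le> real n" using e1 npos by simp
      then have "\<lceil>\<epsilon> * real n\<rceil> \<le> int n" by (simp add: ceiling_le_iff)
      from nat_mono[OF this] show ?thesis unfolding k_def by simp
    qed
    have bk: "b \<le> k" using blt k1 by simp
    have cardAB: "card (A - B) = n - b" using finB BA by (simp add: card_Diff_subset n_def b_def)
    obtain W where W: "W \<subseteq> A - B" "card W = k - b"
      "real (k - b) * sum f (A - B) \<le> real (card (A - B)) * sum f W"
      using top_avg[of "A - B" "k - b" f] finA cardAB diff_le_mono[OF kn, of b] by auto
    have finW: "finite W" using W(1) finA finite_subset by blast
    have disj: "B \<inter> W = {}" using W(1) by auto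
    have cardX: "card (B \<union> W) = k" using card_Un_disjoint[OF finB finW disj] W(2) bk b_def by simp
    have "sum f (B \<union> W) \<le> c * real k"
      using reg[of "B \<union> W"] cardX k1 BA W(1) n_def by auto
    hence h1: "S + sum f W \<le> c * real k" using sum.union_disjoint[OF finB finW disj, of f] S_def by simp
    have sAB: "sum f (A - B) = a * real n - S"
      using sum_diff[OF finA BA, of f] sumA S_def by simp
    have h2: "(real k - real b) * (a * real n - S) \<le> (real n - real b) * sum f W"
      using W(3) sAB cardAB bk b_def card_mono[OF finA BA] n_def by (simp add: of_nat_diff)
    have nb: "real n - real b \<ge> 0" using card_mono[OF finA BA] b_def n_def by simp
    have h3: "(real n - real b) * S + (real n - real b) * sum f W \<le> c * real k * (real n - real b)"
      using mult_right_mono[OF h1 nb] by (simp add: algebra_simps)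
    have h4: "(real n - real b) * S + (real k - real b) * (a * real n - S) \<le> c * real k * (real n - real b)"
      using h2 h3 by linarith
    have iden: "S * (real n - real k) - (a * real b * (real n - real k) + \<eta> * real k * (real n - real b))
       = (real n - real b) * S + (real k - real b) * (a * real n - S) - c * real k * (real n - real b)"
      by (simp add: \<eta>_def algebra_simps)
    have h5: "S * (real n - real k) \<le> a * real b * (real n - real k) + \<eta> * real k * (real n - real b)"
      using h4 iden by linarith
    have nk: "real n - real k > 0"
    proof -
      have "real n * (1 - \<epsilon>) > real n * \<epsilon>" using npos e1 by simp
      then show ?thesis using en1 k2 by (simp add: algebra_simps)
    qed
    have k2e: "real k \<le> 2 * \<epsilon> * real n" using k2 en1 by simp
    have h6: "\<eta> * real k * (real n - real b) \<le> (2*\<epsilon>*\<eta>*real n/(1-2*\<epsilon>)) * (real n - real k)"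
    proof -
      have "real k * (real n - real b) \<le> real k * real n" by (simp add: mult_left_mono)
      moreover have "real k * real n * (1 - 2*\<epsilon>) \<le> 2*\<epsilon>*real n * (real n - real k)"
      proof -
        have "real k * (1 - 2*\<epsilon>) \<le> 2*\<epsilon> * (real n - real k)" using k2e by (simp add: algebra_simps)
        then show ?thesis using npos by (smt (verit) mult.commute mult.left_commute mult_left_mono)
      qed
      ultimately have "real k * (real n - real b) * (1 - 2*\<epsilon>) \<le> 2*\<epsilon>*real n * (real n - real k)"
        using d0 by (smt (verit) mult_right_mono)
      then have "real k * (real n - real b) \<le> (2*\<epsilon>*real n * (real n - real k)) / (1 - 2*\<epsilon>)"
        using d0 by (simp add: le_divide_eq)
      then have "\<eta> * (real k * (real n - real b)) \<le> \<eta> * ((2*\<epsilon>*real n * (real n - real k)) / (1 - 2*\<epsilon>))"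
        using eta0 by (rule mult_left_mono)
      then show ?thesis by (simp add: algebra_simps)
    qed
    have "S * (real n - real k) \<le> (a * real b + 2*\<epsilon>*\<eta>*real n/(1-2*\<epsilon>)) * (real n - real k)"
      using h5 h6 by (simp add: algebra_simps)
    then have "S \<le> a * real b + 2*\<epsilon>*\<eta>*real n/(1-2*\<epsilon>)" using nk by simp
    then show ?thesis using blt by simp
  qed
  show "real (card {x\<in>A. T < f x}) \<le> \<epsilon> * real (card A)"
    using main by (simp add: B_def b_def n_def)
  show "T * real (card {x\<in>A. T < f x}) \<le> sum f {x\<in>A. T < f x}"
    using low by (simp add: B_def b_def S_def)
  show "sum f {x\<in>A. T < f x} \<le> (sum f A / card A) * card {x\<in>A. T < f x}
           + 2*\<epsilon>*(c - sum f A / card A) * card A / (1 - 2*\<epsilon>)"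
    using main by (simp add: B_def b_def S_def a_def \<eta>_def n_def)
qed




lemma pow5_bounds:
  fixes e :: real assumes "0 < e" "e < 1/5"
  shows "1 - 5*e + 8*e^2 \<le> (1-e)^5" and "(1-e)^5 \<le> 1 - 5*e + 10*e^2"
proof -
  have id: "(1-e)^5 = 1 - 5*e + 10*e^2 - 10*e^3 + 5*e^4 - e^5"
    by (simp add: power2_eq_square power3_eq_cube power_def algebra_simps numeral_eq_Suc)
  have "e^3 \<le> e^2 / 5" using assms by (simp add: power2_eq_square power3_eq_cube)
  moreover have "e^5 \<le> e^4" using assms by (simp add: power_decreasing)
  moreover have "0 \<le> e^4" by simp
  ultimately show "1 - 5*e + 8*e^2 \<le> (1-e)^5" using id by linarith
  have "e^4 \<le> e^3" using assms by (simp add: power_decreasing)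
  moreover have "0 \<le> e^5" using assms by simp
  moreover have "0 \<le> e^3" using assms by simp
  ultimately show "(1-e)^5 \<le> 1 - 5*e + 10*e^2" using id by linarith
qed

lemma poly_a:
  fixes e u :: real assumes "0 < e" "e < 1/5" "0 < u"
  shows "(1-5*e+8*e^2)*((2*e+u)*((1-e)*(1-2*e))) - (1-5*e+10*e^2)*(2*e*u*(1+(2*e+u)))
          \<ge> (1-5*e-u)*((2*e+u)*((1-e)*(1-2*e)))"
proof -
  have id: "(1-5*e+8*e^2)*((2*e+u)*((1-e)*(1-2*e))) - (1-5*e+10*e^2)*(2*e*u*(1+(2*e+u)))
      - (1-5*e-u)*((2*e+u)*((1-e)*(1-2*e)))
      = u^2*(1-5*e+12*e^2-20*e^3) + u*e^2*(8-20*e-24*e^2) + 16*e^3*(1-3*e+2*e^2)"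
    by (simp add: power2_eq_square power3_eq_cube algebra_simps)
  have t1: "1-5*e+12*e^2-20*e^3 \<ge> 0"
  proof -
    have "20*e^3 \<le> 4*e^2" using assms by (simp add: power2_eq_square power3_eq_cube)
    moreover have "0 \<le> e^2" by simp
    ultimately show ?thesis using assms by linarith
  qed
  have t2: "8-20*e-24*e^2 \<ge> 0"
  proof -
    have "e^2 \<le> e/5" using assms by (simp add: power2_eq_square)
    then show ?thesis using assms by linarith
  qed
  have t3: "1-3*e+2*e^2 \<ge> 0" using assms by (simp add: power2_eq_square)
  have "u^2*(1-5*e+12*e^2-20*e^3) \<ge> 0" using t1 by simp
  moreover have "u*e^2*(8-20*e-24*e^2) \<ge> 0" using t2 assms by simp
  moreover have "16*e^3*(1-3*e+2*e^2) \<ge> 0" using t3 assms by simp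
  ultimately show ?thesis using id by linarith
qed

lemma poly_b:
  fixes e u :: real assumes "0 < e" "e < 1/5" "0 < u"
  shows "(1-2*e)^2 - 2*e*u*(1+e)^3 \<ge> (1-5*e-u)*(1+e)*(1-2*e)"
proof -
  have id: "(1-2*e)^2 - 2*e*u*(1+e)^3 - (1-5*e-u)*(1+e)*(1-2*e)
     = e*(2+e-10*e^2) + u*(1-3*e-8*e^2-6*e^3-2*e^4)"
    by (simp add: power2_eq_square power3_eq_cube power4_eq_xxxx algebra_simps)
  have "e^2 \<le> e/5" using assms by (simp add: power2_eq_square)
  hence t1: "2+e-10*e^2 \<ge> 0" using assms by linarith
  have "e^3 \<le> e^2/5" using assms by (simp add: power2_eq_square power3_eq_cube)
  moreover have "e^4 \<le> e^2/25"
  proof -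
    have "e * e \<le> 1/5 * (1/5)" using assms by (intro mult_mono) auto
    then have "e^2 * (e * e) \<le> e^2 * (1/25)" by (intro mult_left_mono) auto
    then show ?thesis by (simp add: power2_eq_square power4_eq_xxxx)
  qed
  ultimately have t2: "1-3*e-8*e^2-6*e^3-2*e^4 \<ge> 0" using \<open>e^2 \<le> e/5\<close> assms by linarith
  show ?thesis using id t1 t2 assms by (smt (verit) mult_nonneg_nonneg)
qed

lemma poly_c:
  fixes e u :: real assumes "0 < e" "e < 1/5" "0 < u"
  shows "(2*e+u)*(2*e+u)*((1-e)*(1-2*e)) \<ge> e*u*(1+2*(2*e+u))"
proof -
  have id: "(2*e+u)*(2*e+u)*((1-e)*(1-2*e)) - e*u*(1+2*(2*e+u))
     = 4*e^2*((1-e)*(1-2*e)) + e*u*(3-16*e+8*e^2) + u^2*(1-5*e+2*e^2)"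
    by (simp add: power2_eq_square algebra_simps)
  have t1: "3-16*e+8*e^2 \<ge> 0"
  proof -
    have "8*(e - 1/5)^2 \<ge> 0" by simp
    then show ?thesis using assms by (simp add: power2_eq_square algebra_simps)
  qed
  have t2: "1-5*e+2*e^2 \<ge> 0" using assms by (simp add: power2_eq_square)
  have t3: "(1-e)*(1-2*e) \<ge> 0" using assms by simp
  have "4*e^2*((1-e)*(1-2*e)) \<ge> 0" using t3 by simp
  moreover have "e*u*(3-16*e+8*e^2) \<ge> 0" using t1 assms by simp
  moreover have "u^2*(1-5*e+2*e^2) \<ge> 0" using t2 by simp
  ultimately show ?thesis using id by linarith
qed




lemma case_a:
  fixes e u G D Q L2 L3 E2 :: real
  assumes e0: "0<e" and R: "5*e+u<1" and u0: "0<u" and D0: "D > 0"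
    and G5: "G \<ge> (1-e)^5 * D" and QG: "Q * ((1-e)*(1-2*e)) \<le> e*u*G"
    and L2: "L2 * (2*e+u) \<le> Q" and L3: "L3 * (2*e+u) \<le> Q"
    and E: "E2 \<ge> G - L2 - L3 - 2*Q"
  shows "E2 \<ge> (1-5*e-u) * D"
proof -
  define s where "s = 2*e+u"
  define Wd where "Wd = (1-e)*(1-2*e)"
  have e5: "e < 1/5" using R u0 by simp
  have s0: "s > 0" using e0 u0 s_def by simp
  have W0: "Wd > 0" using e5 e0 Wd_def by simp
  have "(G - L2 - L3 - 2*Q) * s \<le> E2 * s" using E s0 by (simp add: mult_right_mono)
  hence Es: "G*s - 2*Q*(1+s) \<le> E2 * s" using L2 L3 s_def by (simp add: algebra_simps)
  have "(G*s - 2*Q*(1+s)) * Wd \<le> E2 * s * Wd" using Es W0 by (simp add: mult_right_mono)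
  moreover have "(G*s - 2*Q*(1+s)) * Wd = G*s*Wd - 2*(1+s)*(Q*Wd)" by (simp add: algebra_simps)
  moreover have "2*(1+s)*(Q*Wd) \<le> 2*(1+s)*(e*u*G)"
    using QG s0 Wd_def by (intro mult_left_mono) auto
  ultimately have EK: "G * (s*Wd - 2*e*u*(1+s)) \<le> E2 * s * Wd" by (simp add: algebra_simps)
  define K where "K = s*Wd - 2*e*u*(1+s)"
  have Lz0: "2*e*u*(1+s) \<ge> 0" using e0 u0 s0 by simp
  have p5: "1 - 5*e + 8*e^2 \<le> (1-e)^5" "(1-e)^5 \<le> 1 - 5*e + 10*e^2" using pow5_bounds e0 e5 by auto
  have sW0: "s*Wd > 0" using s0 W0 by simp
  have i1: "(1-5*e+8*e^2)*(s*Wd) \<le> (1-e)^5 * (s*Wd)" using p5(1) sW0 by (simp add: mult_right_mono)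
  have i2: "(1-e)^5 * (2*e*u*(1+s)) \<le> (1-5*e+10*e^2)*(2*e*u*(1+s))" using p5(2) Lz0 by (simp add: mult_right_mono)
  have i3: "(1-5*e-u)*(s*Wd) \<le> (1-5*e+8*e^2)*(s*Wd) - (1-5*e+10*e^2)*(2*e*u*(1+s))"
    using poly_a[OF e0 e5 u0] by (simp add: s_def Wd_def)
  have "(1-e)^5 * K = (1-e)^5 * (s*Wd) - (1-e)^5 * (2*e*u*(1+s))" by (simp add: K_def algebra_simps)
  with i1 i2 i3 have PK: "(1-5*e-u)*(s*Wd) \<le> (1-e)^5 * K" by linarith
  have Rpos: "(1-5*e-u)*(s*Wd) > 0" using R sW0 by simp
  have e15: "(1-e)^5 > 0" using e5 by simp
  have K0: "K > 0"
  proof (rule ccontr)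
    assume "\<not> K > 0"
    then have "(1-e)^5 * K \<le> 0" using e15 by (simp add: mult_nonneg_nonpos)
    then show False using PK Rpos by linarith
  qed
  have j1: "(1-e)^5 * D * K \<le> G * K" using G5 K0 by (simp add: mult_right_mono)
  have j2: "D * ((1-5*e-u)*(s*Wd)) \<le> D * ((1-e)^5 * K)" using PK D0 by (simp add: mult_left_mono)
  have "((1-5*e-u)*D) * (s*Wd) \<le> E2 * (s*Wd)" using j1 j2 EK K_def by (simp add: algebra_simps)
  then show ?thesis using mult_right_le_imp_le[OF _ sW0] by blast
qed

lemma case_b:
  fixes e u G D Q L2 L3 E2 :: real
  assumes e0: "0<e" and R: "5*e+u<1" and u0: "0<u" and D0: "D > 0"
    and G1: "G * (1+e) \<ge> D" and QD: "Q * (1-2*e) \<le> e*u*(1+e)^2*D"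
    and L2: "L2 \<le> e*G" and L3: "L3 \<le> e*G"
    and E: "E2 \<ge> G - L2 - L3 - 2*Q"
  shows "E2 \<ge> (1-5*e-u) * D"
proof -
  have e5: "e < 1/5" using R u0 by simp
  have a0: "(1+e)*(1-2*e) > 0" using e0 e5 by simp
  have E1: "G*(1-2*e) - 2*Q \<le> E2" using E L2 L3 by (simp add: algebra_simps)
  have i1: "(G*(1-2*e) - 2*Q) * ((1+e)*(1-2*e)) \<le> E2 * ((1+e)*(1-2*e))"
    using E1 a0 by (simp add: mult_right_mono)
  have i2: "(G*(1-2*e) - 2*Q) * ((1+e)*(1-2*e)) = (G*(1+e))*(1-2*e)^2 - 2*(1+e)*(Q*(1-2*e))"
    by (simp add: power2_eq_square algebra_simps)
  have i3: "D*(1-2*e)^2 \<le> (G*(1+e))*(1-2*e)^2" using G1 by (simp add: mult_right_mono)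
  have i4: "2*(1+e)*(Q*(1-2*e)) \<le> 2*(1+e)*(e*u*(1+e)^2*D)" using QD e0 by simp
  have i5: "D*(1-2*e)^2 - 2*(1+e)*(e*u*(1+e)^2*D) = D*((1-2*e)^2 - 2*e*u*(1+e)^3)"
    by (simp add: power2_eq_square power3_eq_cube algebra_simps)
  have i6: "D*((1-5*e-u)*(1+e)*(1-2*e)) \<le> D*((1-2*e)^2 - 2*e*u*(1+e)^3)"
    using poly_b[OF e0 e5 u0] D0 by (simp add: mult_left_mono)
  have "((1-5*e-u)*D) * ((1+e)*(1-2*e)) \<le> E2 * ((1+e)*(1-2*e))"
    using i1 i2 i3 i4 i5 i6 by (simp add: algebra_simps)
  then show ?thesis using mult_right_le_imp_le[OF _ a0] by blast
qed

lemma case_c: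
  fixes e u G D Q L2 L3 E2 :: real
  assumes e0: "0<e" and R: "5*e+u<1" and u0: "0<u" and D0: "D > 0"
    and G2: "G \<ge> (1-e)^2 * D" and QG: "Q * ((1-e)*(1-2*e)) \<le> e*u*G"
    and L2: "L2 \<le> e*G" and L3: "L3 * (2*e+u) \<le> Q"
    and E: "E2 \<ge> G - L2 - L3 - 2*Q"
  shows "E2 \<ge> (1-5*e-u) * D"
proof -
  define s where "s = 2*e+u"
  define Wd where "Wd = (1-e)*(1-2*e)"
  have e5: "e < 1/5" using R u0 by simp
  have s0: "s > 0" using e0 u0 s_def by simp
  have W0: "Wd > 0" using e5 e0 Wd_def by simp
  have "(G - L2 - L3 - 2*Q) * s \<le> E2 * s" using E s0 by (simp add: mult_right_mono)
  moreover have "L2 * s \<le> e*G*s" using L2 s0 by (simp add: mult_right_mono)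
  ultimately have Es: "G*(1-e)*s - Q*(1+2*s) \<le> E2 * s" using L3 s_def by (simp add: algebra_simps)
  have "(G*(1-e)*s - Q*(1+2*s)) * Wd \<le> E2 * s * Wd" using Es W0 by (simp add: mult_right_mono)
  moreover have "(G*(1-e)*s - Q*(1+2*s)) * Wd = G*(1-e)*s*Wd - (1+2*s)*(Q*Wd)" by (simp add: algebra_simps)
  moreover have "(1+2*s)*(Q*Wd) \<le> (1+2*s)*(e*u*G)"
    using QG s0 Wd_def by (intro mult_left_mono) auto
  ultimately have EK: "G * ((1-e)*s*Wd - e*u*(1+2*s)) \<le> E2 * s * Wd" by (simp add: algebra_simps)
  define K where "K = (1-e)*s*Wd - e*u*(1+2*s)"
  have Lz0: "e*u*(1+2*s) \<ge> 0" using e0 u0 s0 by simp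
  have sW0: "s*Wd > 0" using s0 W0 by simp
  have p3: "(1-e)^3 \<ge> 1 - 3*e"
  proof -
    have "(1-e)^3 = 1 - 3*e + 3*e^2 - e^3" by (simp add: power2_eq_square power3_eq_cube algebra_simps)
    moreover have "e^3 \<le> e^2" using e0 e5 by (simp add: power_decreasing)
    moreover have "0 \<le> e^2" by simp
    ultimately show ?thesis by linarith
  qed
  have p2: "(1-e)^2 \<le> 1" using e0 e5 by (simp add: power_le_one)
  have i1: "(1-3*e)*(s*Wd) \<le> (1-e)^3 * (s*Wd)" using p3 sW0 by (simp add: mult_right_mono)
  have i2: "(1-e)^2 * (e*u*(1+2*s)) \<le> e*u*(1+2*s)" using p2 Lz0 by (simp add: mult_left_le_one_le)
  have i3: "(1-e)^2 * K = (1-e)^3 * (s*Wd) - (1-e)^2 * (e*u*(1+2*s))"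
    by (simp add: K_def power2_eq_square power3_eq_cube algebra_simps)
  have i4: "(1-5*e-u)*(s*Wd) \<le> (1-3*e)*(s*Wd) - e*u*(1+2*s)"
  proof -
    have "s*s*Wd \<ge> e*u*(1+2*s)" using poly_c[OF e0 e5 u0] by (simp add: s_def Wd_def)
    then show ?thesis by (simp add: s_def algebra_simps)
  qed
  have PK: "(1-5*e-u)*(s*Wd) \<le> (1-e)^2 * K" using i1 i2 i3 i4 by linarith
  have Rpos: "(1-5*e-u)*(s*Wd) > 0" using R sW0 by simp
  have e12: "(1-e)^2 > 0" using e5 by simp
  have K0: "K > 0"
  proof (rule ccontr)
    assume "\<not> K > 0"
    then have "(1-e)^2 * K \<le> 0" using e12 by (simp add: mult_nonneg_nonpos)
    then show False using PK Rpos by linarith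
  qed
  have j1: "(1-e)^2 * D * K \<le> G * K" using G2 K0 by (simp add: mult_right_mono)
  have j2: "D * ((1-5*e-u)*(s*Wd)) \<le> D * ((1-e)^2 * K)" using PK D0 by (simp add: mult_left_mono)
  have "((1-5*e-u)*D) * (s*Wd) \<le> E2 * (s*Wd)" using j1 j2 EK K_def by (simp add: algebra_simps)
  then show ?thesis using mult_right_le_imp_le[OF _ sW0] by blast
qed




lemma pow5_prod: "x*q*(x^2*P2)*(x^2*P3) = x^5*(P2*P3*q)" for x q P2 P3 :: real
  by (simp add: power2_eq_square power_def numeral_eq_Suc algebra_simps)

lemma final_arith:
  fixes e u n2 n3 d q P2 P3 b2 b3 Q E2 :: real
  assumes e0: "0<e" and R: "5*e+u<1" and u0: "0<u"
   and P2: "P2>0" and P3: "P3>0" and q0: "q>0"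
   and n2l: "(1-e)^2*P2 \<le> n2" and n2u: "n2 \<le> (1+e)*P2"
   and n3l: "(1-e)^2*P3 \<le> n3" and n3u: "n3 \<le> (1+e)*P3"
   and dl: "(1-e)*q \<le> d" and du: "d \<le> (1+e)*q"
   and b2: "0 \<le> b2" "b2 \<le> e*n2" "b2*((1+u)*(1+e)^2*P3*q - d*n3) \<le> Q"
   and b3: "0 \<le> b3" "b3 \<le> e*n3" "b3*((1+u)*(1+e)^2*P2*q - d*n2) \<le> Q"
   and Q: "Q*(1-2*e) \<le> e*u*q*n2*n3"
   and E: "E2 \<ge> d*n2*n3 - (d*n3*b2 + Q) - (d*n2*b3 + Q)"
  shows "E2 \<ge> (1-5*e-u)*(P2*P3*q)"
proof -
  define G where "G = d*n2*n3"
  define D where "D = P2*P3*q"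
  define L2 where "L2 = d*n3*b2"
  define L3 where "L3 = d*n2*b3"
  have e5: "e < 1/5" using R u0 by simp
  have D0: "D > 0" using P2 P3 q0 D_def by simp
  have e1: "(1-e)^2 > 0" using e5 by simp
  have n2p: "n2 > 0" using n2l mult_pos_pos[OF e1 P2] by linarith
  have n3p: "n3 > 0" using n3l mult_pos_pos[OF e1 P3] by linarith
  have "(1-e)*q > 0" using e5 q0 by simp
  hence dp: "d > 0" using dl by linarith
  have E': "E2 \<ge> G - L2 - L3 - 2*Q" using E by (simp add: G_def L2_def L3_def)
  have QG: "Q * ((1-e)*(1-2*e)) \<le> e*u*G"
  proof -
    have "Q*(1-2*e)*(1-e) \<le> e*u*q*n2*n3*(1-e)" using Q e5 by (simp add: mult_right_mono)
    moreover have "e*u*n2*n3*(q*(1-e)) \<le> e*u*n2*n3*d"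
      using dl e0 u0 n2p n3p by (intro mult_left_mono) (auto simp: mult.commute)
    ultimately show ?thesis by (simp add: G_def algebra_simps)
  qed
  have L2G: "L2 \<le> e*G"
  proof -
    have "d*n3*b2 \<le> d*n3*(e*n2)" using b2(2) dp n3p by (intro mult_left_mono) auto
    then show ?thesis by (simp add: L2_def G_def algebra_simps)
  qed
  have L3G: "L3 \<le> e*G"
  proof -
    have "d*n2*b3 \<le> d*n2*(e*n3)" using b3(2) dp n2p by (intro mult_left_mono) auto
    then show ?thesis by (simp add: L3_def G_def algebra_simps)
  qed
  have tau: "(1+u)*(1+e)^2 \<ge> 1+2*e+u"
  proof -
    have "(1+u)*(1+e)^2 = 1 + 2*e + u + e^2 + 2*e*u + u*e^2" by (simp add: power2_eq_square algebra_simps)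
    moreover have "0 \<le> e^2" "0 \<le> e*u" "0 \<le> u*e^2" using e0 u0 by auto
    ultimately show ?thesis by linarith
  qed
  have A2: "L2 * (2*e+u) \<le> Q" if "d*n3 \<le> q*P3"
  proof -
    have "(1+u)*(1+e)^2*(q*P3) \<ge> (1+2*e+u)*(q*P3)" using tau q0 P3 by (simp add: mult_right_mono)
    hence "(1+u)*(1+e)^2*P3*q - d*n3 \<ge> (2*e+u)*(q*P3)" using that by (simp add: algebra_simps)
    hence "b2*((2*e+u)*(q*P3)) \<le> b2*((1+u)*(1+e)^2*P3*q - d*n3)" using b2(1) by (simp add: mult_left_mono)
    moreover have "b2*(2*e+u)*(d*n3) \<le> b2*(2*e+u)*(q*P3)" using that b2(1) e0 u0 by (simp add: mult_left_mono)
    ultimately show ?thesis using b2(3) by (simp add: L2_def algebra_simps)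
  qed
  have A3: "L3 * (2*e+u) \<le> Q" if "d*n2 \<le> q*P2"
  proof -
    have "(1+u)*(1+e)^2*(q*P2) \<ge> (1+2*e+u)*(q*P2)" using tau q0 P2 by (simp add: mult_right_mono)
    hence "(1+u)*(1+e)^2*P2*q - d*n2 \<ge> (2*e+u)*(q*P2)" using that by (simp add: algebra_simps)
    hence "b3*((2*e+u)*(q*P2)) \<le> b3*((1+u)*(1+e)^2*P2*q - d*n2)" using b3(1) by (simp add: mult_left_mono)
    moreover have "b3*(2*e+u)*(d*n2) \<le> b3*(2*e+u)*(q*P2)" using that b3(1) e0 u0 by (simp add: mult_left_mono)
    ultimately show ?thesis using b3(3) by (simp add: L3_def algebra_simps)
  qed
  have G5: "G \<ge> (1-e)^5 * D"
  proof -
    have h1: "(1-e)*q*((1-e)^2*P2) \<le> d*n2" by (rule mult_mono[OF dl n2l]) (use dp e1 P2 in auto)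
    have "(1-e)*q*((1-e)^2*P2)*((1-e)^2*P3) \<le> d*n2*n3"
      by (rule mult_mono[OF h1 n3l]) (use dp n2p e1 P3 in auto)
    then show ?thesis using pow5_prod[of "1-e" q P2 P3] by (simp add: G_def D_def)
  qed
  show ?thesis
  proof (cases "d*n3 \<le> q*P3")
    case c3: True
    show ?thesis
    proof (cases "d*n2 \<le> q*P2")
      case True
      show ?thesis using case_a[OF e0 R u0 D0 G5 QG A2[OF c3] A3[OF True] E'] D_def by simp
    next
      case False
      have G2: "G \<ge> (1-e)^2 * D"
      proof -
        have "q*P2*((1-e)^2*P3) \<le> d*n2*n3" by (rule mult_mono[OF _ n3l]) (use False dp n2p e1 P3 in auto)
        then show ?thesis by (simp add: G_def D_def algebra_simps)
      qed
      have E'': "E2 \<ge> G - L3 - L2 - 2*Q" using E' by simp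
      show ?thesis using case_c[OF e0 R u0 D0 G2 QG L3G A2[OF c3] E''] D_def by simp
    qed
  next
    case c3: False
    have G2: "G \<ge> (1-e)^2 * D"
    proof -
      have "q*P3*((1-e)^2*P2) \<le> d*n3*n2" by (rule mult_mono[OF _ n2l]) (use c3 dp n3p e1 P2 in auto)
      then show ?thesis by (simp add: G_def D_def algebra_simps)
    qed
    show ?thesis
    proof (cases "d*n2 \<le> q*P2")
      case True
      show ?thesis using case_c[OF e0 R u0 D0 G2 QG L2G A3[OF True] E'] D_def by simp
    next
      case False
      have G1: "G * (1+e) \<ge> D"
      proof -
        have "(q*P3)*(q*P2) \<le> (d*n3)*(d*n2)" by (rule mult_mono) (use c3 False q0 P2 P3 dp n3p in auto)
        also have "\<dots> = G * d" by (simp add: G_def algebra_simps)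
        also have "\<dots> \<le> G * ((1+e)*q)" using du G_def dp n2p n3p by (intro mult_left_mono) auto
        finally have "q * (P2*P3*q) \<le> q * (G*(1+e))" by (simp add: algebra_simps)
        then show ?thesis using q0 D_def by simp
      qed
      have QD: "Q * (1-2*e) \<le> e*u*(1+e)^2*D"
      proof -
        have "n2*n3 \<le> ((1+e)*P2)*((1+e)*P3)" by (rule mult_mono[OF n2u n3u]) (use n2p n3p e0 P2 in auto)
        hence "e*u*q*(n2*n3) \<le> e*u*q*(((1+e)*P2)*((1+e)*P3))" using e0 u0 q0 by (intro mult_left_mono) auto
        then show ?thesis using Q by (simp add: D_def power2_eq_square algebra_simps)
      qed
      show ?thesis using case_b[OF e0 R u0 D0 G1 QD L2G L3G E'] D_def by simp
    qed
  qed
qed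




lemma finite_edges: "finite X \<Longrightarrow> finite Y \<Longrightarrow> finite (edges_between E X Y)"
  by (rule finite_subset[of _ "X \<times> Y"]) (auto simp: edges_between_def)

theorem proposition2p14:
  fixes E :: "'a \<Rightarrow> 'a \<Rightarrow> bool" and V1 V2 V3 :: "'a set"
    and \<epsilon> \<delta> p d12 d13 d23 :: real and v :: 'a
  assumes "graph E"
    and "finite V1" and "finite V2" and "finite V3"
    and "V1 \<inter> V2 = {}" and "V1 \<inter> V3 = {}" and "V2 \<inter> V3 = {}"
    and "\<epsilon> > 0" and "\<delta> > 0" and "p > 0" and "\<epsilon> < 1/2"
    and "density E V1 V2 = d12 * p" and "density E V1 V3 = d13 * p"
    and "density E V2 V3 = d23 * p"
    and "d12 \<ge> \<delta>" and "d13 \<ge> \<delta>" and "d23 \<ge> \<delta>"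
    and "v \<in> V1" and "typical E \<epsilon> p d12 d13 d23 V2 V3 v"
  shows "\<exists>N2 N3. N2 \<subseteq> nbhd E v \<inter> V2 \<and> N3 \<subseteq> nbhd E v \<inter> V3 \<and>
     real (e_count E N2 N3)
       \<ge> (1 - 6 * \<epsilon> - 2 * \<epsilon> / \<delta>) * d12 * d13 * d23 * p ^ 3 * real (card V2) * real (card V3) \<and>
     (good_vertex E \<epsilon> p d12 d13 d23 V1 V2 V3 v \<longrightarrow>
        real (card {xy \<in> edges_between E N2 N3. good_edge E \<epsilon> p d12 d13 V1 V2 V3 xy})
          \<ge> (1 - 6 * \<epsilon> - 2 * \<epsilon> / \<delta>) * d12 * d13 * d23 * p ^ 3 * real (card V2) * real (card V3)) \<and>
     (\<forall>x\<in>N2. real (card (nbhd E x \<inter> N3))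
         \<le> (1 + 2 * \<epsilon> / \<delta>) * (1 + \<epsilon>) ^ 2 * d13 * d23 * p ^ 2 * real (card V3)) \<and>
     (\<forall>x\<in>N3. real (card (nbhd E x \<inter> N2))
         \<le> (1 + 2 * \<epsilon> / \<delta>) * (1 + \<epsilon>) ^ 2 * d12 * d23 * p ^ 2 * real (card V2))"
proof -
  note gE = assms(1)
  have e0: "\<epsilon> > 0" and dl0: "\<delta> > 0" and p0: "p > 0" and e1: "\<epsilon> < 1/2"
    using assms by auto
  define N2 where "N2 = nbhd E v \<inter> V2"
  define N3 where "N3 = nbhd E v \<inter> V3"
  have finN: "finite N2" "finite N3" using assms(3,4) by (auto simp: N2_def N3_def)
  have ty: "approx_eq (real (card N2)) \<epsilon> (d12 * p * real (card V2))"
    "approx_eq (real (card N3)) \<epsilon> (d13 * p * real (card V3))"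
    "\<exists>N2' N3'. N2' \<subseteq> N2 \<and> N3' \<subseteq> N3 \<and>
          real (card N2') \<ge> (1 - \<epsilon>) * real (card N2) \<and>
          real (card N3') \<ge> (1 - \<epsilon>) * real (card N3) \<and>
          eps_p_regular E \<epsilon> p N2' N3' \<and>
          approx_eq (density E N2' N3') \<epsilon> (d23 * p)"
    using assms(19) unfolding typical_def Let_def N2_def N3_def by auto
  obtain M2 M3 where M: "M2 \<subseteq> N2" "M3 \<subseteq> N3"
    "real (card M2) \<ge> (1 - \<epsilon>) * real (card N2)" "real (card M3) \<ge> (1 - \<epsilon>) * real (card N3)"
    "eps_p_regular E \<epsilon> p M2 M3" "approx_eq (density E M2 M3) \<epsilon> (d23 * p)"
    using ty(3) by blast
  have finM: "finite M2" "finite M3" using M(1,2) finN finite_subset by auto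
  define u where "u = 2*\<epsilon>/\<delta>"
  define T2 where "T2 = (1 + 2 * \<epsilon> / \<delta>) * (1 + \<epsilon>) ^ 2 * d13 * d23 * p ^ 2 * real (card V3)"
  define T3 where "T3 = (1 + 2 * \<epsilon> / \<delta>) * (1 + \<epsilon>) ^ 2 * d12 * d23 * p ^ 2 * real (card V2)"
  define f2 where "f2 = (\<lambda>x. real (card (nbhd E x \<inter> M3)))"
  define f3 where "f3 = (\<lambda>y. real (card (nbhd E y \<inter> M2)))"
  define B2 where "B2 = {x\<in>M2. T2 < f2 x}"
  define B3 where "B3 = {y\<in>M3. T3 < f3 y}"
  define D where "D = d12 * d13 * d23 * p ^ 3 * real (card V2) * real (card V3)"
  define EE where "EE = real (e_count E (M2 - B2) (M3 - B3))"
  have deg2: "\<forall>x\<in>M2 - B2. real (card (nbhd E x \<inter> (M3 - B3))) \<le> T2"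
  proof
    fix x assume x: "x \<in> M2 - B2"
    have "card (nbhd E x \<inter> (M3 - B3)) \<le> card (nbhd E x \<inter> M3)"
      using finM by (intro card_mono) auto
    moreover have "\<not> T2 < f2 x" using x by (auto simp: B2_def)
    ultimately show "real (card (nbhd E x \<inter> (M3 - B3))) \<le> T2" by (simp add: f2_def)
  qed
  have deg3: "\<forall>x\<in>M3 - B3. real (card (nbhd E x \<inter> (M2 - B2))) \<le> T3"
  proof
    fix x assume x: "x \<in> M3 - B3"
    have "card (nbhd E x \<inter> (M2 - B2)) \<le> card (nbhd E x \<inter> M2)"
      using finM by (intro card_mono) auto
    moreover have "\<not> T3 < f3 x" using x by (auto simp: B3_def)
    ultimately show "real (card (nbhd E x \<inter> (M2 - B2))) \<le> T3" by (simp add: f3_def)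
  qed
  have D0: "D \<ge> 0" using assms(15,16,17) dl0 p0 by (simp add: D_def)
  have key: "EE \<ge> (1 - 5*\<epsilon> - u) * D" if R: "5*\<epsilon> + u < 1" and Dp: "D > 0"
  proof -
    define P2 where "P2 = d12 * p * real (card V2)"
    define P3 where "P3 = d13 * p * real (card V3)"
    define q where "q = d23 * p"
    define n2 where "n2 = real (card M2)"
    define n3 where "n3 = real (card M3)"
    define d where "d = density E M2 M3"
    define b2 where "b2 = real (card B2)"
    define b3 where "b3 = real (card B3)"
    have d120: "d12 > 0" "d13 > 0" "d23 > 0" using assms(15,16,17) dl0 by auto
    have q0: "q > 0" using d120 p0 by (simp add: q_def)
    have Deq: "D = P2 * P3 * q" by (simp add: D_def P2_def P3_def q_def power3_eq_cube algebra_simps)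
    have cV2: "card V2 > 0"
    proof (rule ccontr)
      assume "\<not> card V2 > 0" then have "D = 0" by (simp add: D_def)
      then show False using Dp by simp
    qed
    have cV3: "card V3 > 0"
    proof (rule ccontr)
      assume "\<not> card V3 > 0" then have "D = 0" by (simp add: D_def)
      then show False using Dp by simp
    qed
    have P2p: "P2 > 0" using d120 p0 cV2 by (simp add: P2_def)
    have P3p: "P3 > 0" using d120 p0 cV3 by (simp add: P3_def)
    have u0: "u > 0" using e0 dl0 by (simp add: u_def)
    have cN2: "(1-\<epsilon>)*P2 \<le> real (card N2)" "real (card N2) \<le> (1+\<epsilon>)*P2"
      using ty(1) by (auto simp: approx_eq_def P2_def)
    have cN3: "(1-\<epsilon>)*P3 \<le> real (card N3)" "real (card N3) \<le> (1+\<epsilon>)*P3"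
      using ty(2) by (auto simp: approx_eq_def P3_def)
    have n2l: "(1-\<epsilon>)^2*P2 \<le> n2"
    proof -
      have "(1-\<epsilon>)*((1-\<epsilon>)*P2) \<le> (1-\<epsilon>)*real (card N2)" using cN2(1) e1 by (intro mult_left_mono) auto
      then show ?thesis using M(3) by (simp add: n2_def power2_eq_square algebra_simps)
    qed
    have n3l: "(1-\<epsilon>)^2*P3 \<le> n3"
    proof -
      have "(1-\<epsilon>)*((1-\<epsilon>)*P3) \<le> (1-\<epsilon>)*real (card N3)" using cN3(1) e1 by (intro mult_left_mono) auto
      then show ?thesis using M(4) by (simp add: n3_def power2_eq_square algebra_simps)
    qed
    have n2u: "n2 \<le> (1+\<epsilon>)*P2" using card_mono[OF finN(1) M(1)] cN2(2) by (simp add: n2_def)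
    have n3u: "n3 \<le> (1+\<epsilon>)*P3" using card_mono[OF finN(2) M(2)] cN3(2) by (simp add: n3_def)
    have e1': "(1-\<epsilon>)^2 > 0" using e1 by simp
    have n2p: "n2 > 0" using n2l mult_pos_pos[OF e1' P2p] by linarith
    have n3p: "n3 > 0" using n3l mult_pos_pos[OF e1' P3p] by linarith
    have dl: "(1-\<epsilon>)*q \<le> d" and du: "d \<le> (1+\<epsilon>)*q"
      using M(6) by (auto simp: approx_eq_def d_def q_def)
    have ep: "\<epsilon>*p \<le> (u/2)*q"
    proof -
      have "\<epsilon>*p*\<delta> \<le> \<epsilon>*p*d23" using assms(17) e0 p0 by simp
      then show ?thesis using dl0 by (simp add: u_def q_def field_simps)
    qed
    have e0c: "real (e_count E M2 M3) = d * n2 * n3"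
      using n2p n3p by (simp add: d_def density_def n2_def n3_def)
    have regM: "\<And>X' Y'. X' \<subseteq> M2 \<Longrightarrow> Y' \<subseteq> M3 \<Longrightarrow> real (card X') \<ge> \<epsilon> * n2
        \<Longrightarrow> real (card Y') \<ge> \<epsilon> * n3 \<Longrightarrow> \<bar>d - density E X' Y'\<bar> \<le> \<epsilon> * p"
      using M(5) by (auto simp: eps_p_regular_def d_def n2_def n3_def)
    have en3: "\<epsilon> * n3 \<le> n3" "\<epsilon> * n2 \<le> n2" using e1 n3p n2p by auto
    have reg2: "sum f2 X \<le> ((d + \<epsilon>*p)*n3) * real (card X)"
      if X: "X \<subseteq> M2" "\<epsilon> * real (card M2) \<le> real (card X)" for X
    proof (cases "card X = 0")
      case True
      then have "X = {}" using finM(1) X(1) finite_subset by fastforce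
      then show ?thesis by simp
    next
      case False
      have finX: "finite X" using finM(1) X(1) finite_subset by blast
      have "\<bar>d - density E X M3\<bar> \<le> \<epsilon> * p" using regM[OF X(1) order_refl] X(2) en3 by (simp add: n2_def n3_def)
      hence dX: "density E X M3 \<le> d + \<epsilon>*p" by linarith
      have "sum f2 X = real (e_count E X M3)" using e_count_sum[OF finX finM(2)] by (simp add: f2_def)
      also have "\<dots> = density E X M3 * (real (card X) * n3)"
        using False n3p by (simp add: density_def n3_def)
      also have "\<dots> \<le> (d + \<epsilon>*p) * (real (card X) * n3)" using dX n3p by (intro mult_right_mono) auto
      finally show ?thesis by (simp add: algebra_simps)
    qed
    have reg3: "sum f3 Y \<le> ((d + \<epsilon>*p)*n2) * real (card Y)"
      if Y: "Y \<subseteq> M3" "\<epsilon> * real (card M3) \<le> real (card Y)" for Y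
    proof (cases "card Y = 0")
      case True
      then have "Y = {}" using finM(2) Y(1) finite_subset by fastforce
      then show ?thesis by simp
    next
      case False
      have finY: "finite Y" using finM(2) Y(1) finite_subset by blast
      have "\<bar>d - density E M2 Y\<bar> \<le> \<epsilon> * p" using regM[OF order_refl Y(1)] Y(2) en3 by (simp add: n2_def n3_def)
      hence dY: "density E M2 Y \<le> d + \<epsilon>*p" by linarith
      have "sum f3 Y = real (e_count E Y M2)" using e_count_sum[OF finY finM(1)] by (simp add: f3_def)
      also have "\<dots> = real (e_count E M2 Y)" using e_count_sym[OF gE] by simp
      also have "\<dots> = density E M2 Y * (n2 * real (card Y))"
        using False n2p by (simp add: density_def n2_def)
      also have "\<dots> \<le> (d + \<epsilon>*p) * (n2 * real (card Y))" using dY n2p by (intro mult_right_mono) auto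
      finally show ?thesis by (simp add: algebra_simps)
    qed
    have T2eq: "T2 = (1+u)*(1+\<epsilon>)^2*P3*q" by (simp add: T2_def u_def P3_def q_def power2_eq_square algebra_simps)
    have T3eq: "T3 = (1+u)*(1+\<epsilon>)^2*P2*q" by (simp add: T3_def u_def P2_def q_def power2_eq_square algebra_simps)
    have dep: "d + \<epsilon>*p \<le> (1+u)*(1+\<epsilon>)*q"
    proof -
      have "(1+u)*(1+\<epsilon>)*q = (1+\<epsilon>)*q + u*q + u*\<epsilon>*q" by (simp add: algebra_simps)
      moreover have "u*\<epsilon>*q \<ge> 0" using u0 e0 q0 by simp
      moreover have "u*q \<ge> (u/2)*q" using u0 q0 by simp
      ultimately show ?thesis using du ep by linarith
    qed
    have "(1-\<epsilon>)*q > 0" using e1 q0 by simp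
    moreover have "\<epsilon>*p > 0" using e0 p0 by simp
    ultimately have dep0: "d + \<epsilon>*p \<ge> 0" using dl by linarith
    have cT2: "(d + \<epsilon>*p)*n3 \<le> T2"
    proof -
      have "(d + \<epsilon>*p)*n3 \<le> ((1+u)*(1+\<epsilon>)*q)*((1+\<epsilon>)*P3)"
        by (rule mult_mono[OF dep n3u]) (use u0 e0 q0 n3p in auto)
      then show ?thesis by (simp add: T2eq power2_eq_square algebra_simps)
    qed
    have cT3: "(d + \<epsilon>*p)*n2 \<le> T3"
    proof -
      have "(d + \<epsilon>*p)*n2 \<le> ((1+u)*(1+\<epsilon>)*q)*((1+\<epsilon>)*P2)"
        by (rule mult_mono[OF dep n2u]) (use u0 e0 q0 n2p in auto)
      then show ?thesis by (simp add: T3eq power2_eq_square algebra_simps)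
    qed
    have cM2: "card M2 > 0" using n2p by (simp add: n2_def)
    have cM3: "card M3 > 0" using n3p by (simp add: n3_def)
    note S2 = side[OF finM(1) e0 e1 reg2 cT2 cM2, folded B2_def]
    note S3 = side[OF finM(2) e0 e1 reg3 cT3 cM3, folded B3_def]
    have sf2: "sum f2 M2 = d*n2*n3"
      using e_count_sum[OF finM(1) finM(2)] e0c by (simp add: f2_def)
    have "sum f3 M3 = real (e_count E M3 M2)"
      using e_count_sum[OF finM(2) finM(1), of E] by (simp add: f3_def)
    hence sf3: "sum f3 M3 = d*n2*n3" using e0c e_count_sym[OF gE, of M3 M2] by simp
    define Q where "Q = 2*\<epsilon>*(\<epsilon>*p*n3)*n2/(1-2*\<epsilon>)"
    have a2: "sum f2 M2 / real (card M2) = d*n3" using sf2 n2p by (simp add: n2_def)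
    have a3: "sum f3 M3 / real (card M3) = d*n2" using sf3 n3p by (simp add: n3_def)
    have S2u: "sum f2 B2 \<le> d*n3*b2 + Q"
      using S2(3) unfolding a2 by (simp add: Q_def b2_def n2_def algebra_simps)
    have S3u: "sum f3 B3 \<le> d*n2*b3 + Q"
      using S3(3) unfolding a3 by (simp add: Q_def b3_def n3_def algebra_simps)
    have b2b: "0 \<le> b2" "b2 \<le> \<epsilon>*n2" "b2*((1+u)*(1+\<epsilon>)^2*P3*q - d*n3) \<le> Q"
      using S2(1) S2(2) S2u T2eq by (auto simp: b2_def n2_def algebra_simps)
    have b3b: "0 \<le> b3" "b3 \<le> \<epsilon>*n3" "b3*((1+u)*(1+\<epsilon>)^2*P2*q - d*n2) \<le> Q"
      using S3(1) S3(2) S3u T3eq by (auto simp: b3_def n3_def algebra_simps)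
    have Qb: "Q*(1-2*\<epsilon>) \<le> \<epsilon>*u*q*n2*n3"
    proof -
      have ne: "1-2*\<epsilon> \<noteq> 0" using e1 by simp
      have "Q*(1-2*\<epsilon>) = 2*\<epsilon>*(\<epsilon>*p*n3)*n2" using ne by (simp add: Q_def)
      also have "\<dots> = 2*\<epsilon>*n2*n3*(\<epsilon>*p)" by (simp add: algebra_simps)
      finally have "Q*(1-2*\<epsilon>) = 2*\<epsilon>*n2*n3*(\<epsilon>*p)" .
      also have "\<dots> \<le> 2*\<epsilon>*n2*n3*((u/2)*q)" using ep e0 n2p n3p by (intro mult_left_mono) auto
      finally show ?thesis by (simp add: algebra_simps)
    qed
    have finB2: "finite B2" and finB3: "finite B3" using finM by (auto simp: B2_def B3_def)
    have sS2: "sum f2 B2 = real (e_count E B2 M3)"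
      using e_count_sum[OF finB2 finM(2)] by (simp add: f2_def)
    have "sum f3 B3 = real (e_count E B3 M2)"
      using e_count_sum[OF finB3 finM(1), of E] by (simp add: f3_def)
    hence sS3: "sum f3 B3 = real (e_count E M2 B3)" using e_count_sym[OF gE, of B3 M2] by simp
    have EEb: "EE \<ge> d*n2*n3 - (d*n3*b2 + Q) - (d*n2*b3 + Q)"
    proof -
      have "edges_between E M2 M3 \<subseteq> edges_between E (M2 - B2) (M3 - B3) \<union> edges_between E B2 M3 \<union> edges_between E M2 B3"
        by (auto simp: edges_between_def)
      hence "e_count E M2 M3 \<le> card (edges_between E (M2 - B2) (M3 - B3) \<union> edges_between E B2 M3 \<union> edges_between E M2 B3)"
        unfolding e_count_def using finM finB2 finB3
        by (intro card_mono) (auto intro: finite_edges)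
      also have "\<dots> \<le> card (edges_between E (M2 - B2) (M3 - B3) \<union> edges_between E B2 M3) + card (edges_between E M2 B3)"
        by (rule card_Un_le)
      also have "\<dots> \<le> card (edges_between E (M2 - B2) (M3 - B3)) + card (edges_between E B2 M3) + card (edges_between E M2 B3)"
        using card_Un_le by simp
      finally have "real (e_count E M2 M3) \<le> EE + real (e_count E B2 M3) + real (e_count E M2 B3)"
        by (simp add: EE_def e_count_def)
      then show ?thesis using e0c sS2 sS3 S2u S3u by linarith
    qed
    have "EE \<ge> (1-5*\<epsilon>-u)*(P2*P3*q)"
      by (rule final_arith[OF e0 R u0 P2p P3p q0 n2l n2u n3l n3u dl du b2b b3b Qb EEb])
    then show ?thesis using Deq by simp
  qed
  have main1: "EE \<ge> (1 - 6*\<epsilon> - u) * D"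
  proof (cases "5*\<epsilon> + u < 1 \<and> D > 0")
    case True
    then have "EE \<ge> (1 - 5*\<epsilon> - u) * D" using key by blast
    moreover have "(1 - 6*\<epsilon> - u) * D \<le> (1 - 5*\<epsilon> - u) * D" using True e0 by simp
    ultimately show ?thesis by linarith
  next
    case nc: False
    have "(1 - 6*\<epsilon> - u) * D \<le> 0"
    proof (cases "5*\<epsilon> + u < 1")
      case True
      then have "D = 0" using nc D0 by auto
      then show ?thesis by simp
    next
      case False
      then have "1 - 6*\<epsilon> - u \<le> 0" using e0 by simp
      then show ?thesis using D0 by (simp add: mult_nonpos_nonneg)
    qed
    then show ?thesis by (simp add: EE_def)
  qed
  have main2: "real (card {xy \<in> edges_between E (M2 - B2) (M3 - B3). good_edge E \<epsilon> p d12 d13 V1 V2 V3 xy})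
     \<ge> (1 - 6*\<epsilon> - u) * D" if gv: "good_vertex E \<epsilon> p d12 d13 d23 V1 V2 V3 v"
  proof -
    define Bad where "Bad = {xy \<in> edges_between E N2 N3. \<not> good_edge E \<epsilon> p d12 d13 V1 V2 V3 xy}"
    define Good where "Good = {xy \<in> edges_between E (M2 - B2) (M3 - B3). good_edge E \<epsilon> p d12 d13 V1 V2 V3 xy}"
    have bad: "real (card Bad) \<le> \<epsilon> * D"
      using gv by (simp add: good_vertex_def Bad_def N2_def N3_def D_def algebra_simps)
    have finB: "finite Bad" using finite_edges[OF finN] by (simp add: Bad_def)
    have finG: "finite Good" using finite_edges[of "M2 - B2" "M3 - B3" E] finM by (simp add: Good_def)
    have "edges_between E (M2 - B2) (M3 - B3) \<subseteq> Good \<union> Bad"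
      using M(1,2) by (auto simp: Good_def Bad_def edges_between_def)
    then have "e_count E (M2 - B2) (M3 - B3) \<le> card (Good \<union> Bad)"
      unfolding e_count_def using finB finG by (intro card_mono) auto
    also have "\<dots> \<le> card Good + card Bad" by (rule card_Un_le)
    finally have "EE \<le> real (card Good) + real (card Bad)" by (simp add: EE_def)
    moreover have "(1 - 6*\<epsilon> - u) * D \<le> real (card Good)"
    proof (cases "5*\<epsilon> + u < 1 \<and> D > 0")
      case True
      then have "EE \<ge> (1 - 5*\<epsilon> - u) * D" using key by blast
      then show ?thesis using bad \<open>EE \<le> real (card Good) + real (card Bad)\<close> by (simp add: algebra_simps)
    next
      case nc: False
      have "(1 - 6*\<epsilon> - u) * D \<le> 0"
      proof (cases "5*\<epsilon> + u < 1")
        case True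
        then have "D = 0" using nc D0 by auto
        then show ?thesis by simp
      next
        case False
        then have "1 - 6*\<epsilon> - u \<le> 0" using e0 by simp
        then show ?thesis using D0 by (simp add: mult_nonpos_nonneg)
      qed
      then show ?thesis by simp
    qed
    ultimately show ?thesis by (simp add: Good_def)
  qed
  have sub: "M2 - B2 \<subseteq> nbhd E v \<inter> V2" "M3 - B3 \<subseteq> nbhd E v \<inter> V3"
    using M(1,2) by (auto simp: N2_def N3_def)
  have Deq: "(1 - 6 * \<epsilon> - 2 * \<epsilon> / \<delta>) * d12 * d13 * d23 * p ^ 3 * real (card V2) * real (card V3)
     = (1 - 6*\<epsilon> - u) * D" by (simp add: D_def u_def algebra_simps)
  show ?thesis
    apply (rule exI[of _ "M2 - B2"], rule exI[of _ "M3 - B3"])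
    using sub main1 main2 deg2 deg3 Deq
    by (simp add: EE_def T2_def T3_def)
qed


end
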